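(* Let $\mathcal{B}\subseteq\{1,2\}^3$ be a basic set with associated SNRE $F=\{F^{(a)},F^{(b)}\}$, sequences $(a_n),(b_n)$ and $S_2$-SFT $X^{\mathcal{B}}$. Suppose the symbol $1$ is a dominate symbol (i.e. $a_n\ge b_n$ for all $n\in\mathbb{N}$) and is essential (i.e. $a_n\ge2$ for some $n$). Then $F^{(a)}_1\neq y^2$. Furthermore: (1) if $F^{(a)}_1=x^2$, then $h(X^{\mathcal{B}})=\frac14\lim_{n\to\infty}\Big(\ln a_1+\sum_{j=1}^{n-1}2^{-j}\ln r^{(a)}_j\Big)$; (2) if $F^{(a)}_1=xy$ and $F^{(b)}_1=xy$, then $h(X^{\mathcal{B}})=\frac14\lim_{n\to\infty}\Big((\widehat v_1)^{[1]}+\sum_{j=1}^{n-1}2^{-j}(\ln\widehat r_j)^{[1]}\Big)$, where $\widehat v_1=R^{-1}v_1$, $\ln\widehat r_j=R^{-1}\ln r_j$; (3) if $F^{(a)}_1=xy$ and $F^{(b)}_1=y^2$, then $|B_n(X^{\mathcal{B}})|$ grows at most exponentially in $n$ (there is $c>0$ with $\ln|B_n(X^{\mathcal{B}})|\le cn$ for all $n$), and $h(X^{\mathcal{B}})=0$.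
   Context: $S_2$ is the free semigroup on two generators, identified with finite words over $\{1,2\}$ (root $\epsilon$). Alphabet $\mathcal{A}=\{1,2\}$; a basic set $\mathcal{B}\subseteq\mathcal{A}^3$ is a set of admissible 2-blocks $(i,i_1,i_2)$, $X^{\mathcal{B}}$ the associated $S_2$-SFT. $B_n(X^{\mathcal{B}})$ is the set of maps $u$ from words of length $\le n$ to $\mathcal{A}$ with $(u(w),u(w1),u(w2))\in\mathcal{B}$ for all words $w$ of length $\le n-1$; $a_n$, $b_n$ count those with $u(\epsilon)=1$, resp. $2$, so $|B_n(X^{\mathcal{B}})|=a_n+b_n$. The SNRE is $F^{(a)}(x,y)=\sum_{(1,i,j)\in\mathcal{B}}z_iz_j$, $F^{(b)}(x,y)=\sum_{(2,i,j)\in\mathcal{B}}z_iz_j$ ($z_1=x,z_2=y$), with $a_0=b_0=1$, $a_n=F^{(a)}(a_{n-1},b_{n-1})$, $b_n=F^{(b)}(a_{n-1},b_{n-1})$. Entropy: $h(X^{\mathcal{B}})=\limsup_{n}\frac{\ln(a_n+b_n)}{2^{n+1}-1}$ (known to be a limit). For $*\in\{a,b\}$, $F^{( * )}_1$ denotes the monomial (with coefficient $1$) among $x^2,xy,y^2$ occurring in $F^{( * )}$ with nonzero coefficient and with the highest power of $x$; and $r^{( * )}_j=F^{( * )}(a_j,b_j)/F^{( * )}_1(a_j,b_j)$. Let $v_1=(\ln a_1,\ln b_1)^T$, $\ln r_j=(\ln r^{(a)}_j,\ln r^{(b)}_j)^T$, $w^{[1]}$ the first entry of a vector $w$, and let $R$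 be an invertible $2\times2$ matrix with $R_{11}=1$ such that $\begin{pmatrix}1&1\\1&1\end{pmatrix}=R\begin{pmatrix}2&0\\0&0\end{pmatrix}R^{-1}$. *)

theory Defs
  imports "HOL-Analysis.Analysis"
begin

text \<open>Symbols are the naturals 1 and 2; a basic set is a set of triples (i, i1, i2).
  Words of S_2 are lists over {1,2}; the root is the empty list, w1 = w @ [1].\<close>

definition basic_set :: "(nat \<times> nat \<times> nat) set \<Rightarrow> bool" where
  "basic_set B \<longleftrightarrow> B \<subseteq> {1,2} \<times> {1,2} \<times> {1,2}"

definition words_le :: "nat \<Rightarrow> nat list set" where
  "words_le n = {w. set w \<subseteq> {1,2} \<and> length w \<le> n}"

text \<open>n-blocks: maps from words of length \<le> n to the alphabet (extended by 0 elsewhere,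
  so that they are determined by their values on words of length \<le> n).\<close>
definition blocks :: "(nat \<times> nat \<times> nat) set \<Rightarrow> nat \<Rightarrow> (nat list \<Rightarrow> nat) set" where
  "blocks B n = {u. (\<forall>w\<in>words_le n. u w \<in> {1,2}) \<and> (\<forall>w. w \<notin> words_le n \<longrightarrow> u w = 0) \<and>
      (\<forall>w. set w \<subseteq> {1,2} \<and> length w < n \<longrightarrow> (u w, u (w @ [1]), u (w @ [2])) \<in> B)}"

definition acount :: "(nat \<times> nat \<times> nat) set \<Rightarrow> nat \<Rightarrow> nat" where
  "acount B n = card {u \<in> blocks B n. u [] = 1}"

definition bcount :: "(nat \<times> nat \<times> nat) set \<Rightarrow> nat \<Rightarrow> nat" where
  "bcount B n = card {u \<in> blocks B n. u [] = 2}"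

definition entropy :: "(nat \<times> nat \<times> nat) set \<Rightarrow> ereal" where
  "entropy B = limsup (\<lambda>n. ereal (ln (real (card (blocks B n))) / (2 ^ (n + 1) - 1)))"

definition zvar :: "nat \<Rightarrow> real \<Rightarrow> real \<Rightarrow> real" where
  "zvar i x y = (if i = 1 then x else y)"

definition SNRE :: "(nat \<times> nat \<times> nat) set \<Rightarrow> nat \<Rightarrow> real \<Rightarrow> real \<Rightarrow> real" where
  "SNRE B k x y = (\<Sum>(i, j) \<in> {(i, j). (k, i, j) \<in> B}. zvar i x y * zvar j x y)"

text \<open>Monomials x^2, xy, y^2 are represented by their x-degree d \<in> {2,1,0}: x^d y^(2-d).\<close>
definition mono :: "nat \<Rightarrow> real \<Rightarrow> real \<Rightarrow> real" where
  "mono d x y = x ^ d * y ^ (2 - d)"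

definition xdeg :: "nat \<Rightarrow> nat \<Rightarrow> nat" where
  "xdeg i j = (if i = 1 then 1 else 0) + (if j = 1 then 1 else 0)"

definition SNRE_coeff :: "(nat \<times> nat \<times> nat) set \<Rightarrow> nat \<Rightarrow> nat \<Rightarrow> nat" where
  "SNRE_coeff B k d = card {(i, j). (k, i, j) \<in> B \<and> xdeg i j = d}"

definition F1 :: "(nat \<times> nat \<times> nat) set \<Rightarrow> nat \<Rightarrow> nat option" where
  "F1 B k = (let S = {d. d \<le> 2 \<and> SNRE_coeff B k d \<noteq> 0} in if S = {} then None else Some (Max S))"

definition rr :: "(nat \<times> nat \<times> nat) set \<Rightarrow> nat \<Rightarrow> nat \<Rightarrow> real" where
  "rr B k j = SNRE B k (acount B j) (bcount B j) /
     mono (the (F1 B k)) (acount B j) (bcount B j)"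

end

theory Submission
  imports Defs "HOL-Real_Asymp.Real_Asymp"
begin


definition CC :: "(nat \<times> nat \<times> nat) set \<Rightarrow> nat \<Rightarrow> nat \<Rightarrow> (nat list \<Rightarrow> nat) set" where
  "CC B n k = {u \<in> blocks B n. u [] = k}"

definition join :: "nat \<Rightarrow> (nat list \<Rightarrow> nat) \<Rightarrow> (nat list \<Rightarrow> nat) \<Rightarrow> nat list \<Rightarrow> nat" where
  "join k u1 u2 = (\<lambda>w. case w of [] \<Rightarrow> k | x # w' \<Rightarrow> if x = 1 then u1 w' else if x = 2 then u2 w' else 0)"

definition SS :: "(nat \<times> nat \<times> nat) set \<Rightarrow> nat \<Rightarrow> (nat \<times> nat) set" where
  "SS B k = {(i, j). (k, i, j) \<in> B}"

lemma words_le_Cons: "x # w \<in> words_le (Suc n) \<longleftrightarrow> x \<in> {1,2} \<and> w \<in> words_le n"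
  by (auto simp: words_le_def)

lemma nil_words_le[simp]: "[] \<in> words_le n"
  by (auto simp: words_le_def)

lemma CC_Suc:
  assumes basic: "basic_set B"
  shows "CC B (Suc n) k = (\<lambda>(ij, (u1, u2)). join k u1 u2) ` (SIGMA ij:SS B k. CC B n (fst ij) \<times> CC B n (snd ij))"
proof
  show "CC B (Suc n) k \<subseteq> (\<lambda>(ij, (u1, u2)). join k u1 u2) ` (SIGMA ij:SS B k. CC B n (fst ij) \<times> CC B n (snd ij))"
  proof
    fix u assume u: "u \<in> CC B (Suc n) k"
    hence ub: "u \<in> blocks B (Suc n)" and u0: "u [] = k" by (auto simp: CC_def)
    define u1 where "u1 = (\<lambda>w. u (1 # w))"
    define u2 where "u2 = (\<lambda>w. u (2 # w))"
    have B0: "(u [], u [1], u [2]) \<in> B" using ub unfolding blocks_def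
      by (metis (no_types, lifting) append_Nil empty_subsetI list.size(3) mem_Collect_eq set_empty zero_less_Suc)
    have ij: "(u [1], u [2]) \<in> SS B k" using B0 u0 by (auto simp: SS_def)
    have ublk: "u' \<in> blocks B n" if "u' = (\<lambda>w. u (x # w))" "x \<in> {1,2}" for u' x
    proof -
      have "\<forall>w\<in>words_le n. u' w \<in> {1,2}"
        using ub that words_le_Cons[of x _ n] by (auto simp: blocks_def)
      moreover have "\<forall>w. w \<notin> words_le n \<longrightarrow> u' w = 0"
        using ub that words_le_Cons[of x _ n] by (auto simp: blocks_def)
      moreover have "\<forall>w. set w \<subseteq> {1,2} \<and> length w < n \<longrightarrow> (u' w, u' (w @ [1]), u' (w @ [2])) \<in> B"
      proof (intro allI impI)
        fix w :: "nat list" assume "set w \<subseteq> {1,2} \<and> length w < n"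
        hence "set (x # w) \<subseteq> {1,2} \<and> length (x # w) < Suc n" using that by auto
        hence "(u (x#w), u ((x#w) @ [1]), u ((x#w) @ [2])) \<in> B" using ub unfolding blocks_def by blast
        thus "(u' w, u' (w @ [1]), u' (w @ [2])) \<in> B" using that by simp
      qed
      ultimately show ?thesis by (simp add: blocks_def)
    qed
    have "u1 \<in> CC B n (u [1])" using ublk[of u1 1] by (simp add: CC_def u1_def)
    moreover have "u2 \<in> CC B n (u [2])" using ublk[of u2 2] by (simp add: CC_def u2_def)
    moreover have "u = join k u1 u2"
    proof
      fix w show "u w = join k u1 u2 w"
      proof (cases w)
        case Nil thus ?thesis using u0 by (simp add: join_def)
      next
        case (Cons x w')
        have "x \<notin> {1,2} \<Longrightarrow> u w = 0" using ub Cons words_le_Cons[of x w' n] by (auto simp: blocks_def)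
        thus ?thesis using Cons by (auto simp: join_def u1_def u2_def)
      qed
    qed
    ultimately show "u \<in> (\<lambda>(ij, (u1, u2)). join k u1 u2) ` (SIGMA ij:SS B k. CC B n (fst ij) \<times> CC B n (snd ij))"
      using ij by (intro image_eqI[where x="((u [1], u [2]), (u1, u2))"]) auto
  qed
next
  show "(\<lambda>(ij, (u1, u2)). join k u1 u2) ` (SIGMA ij:SS B k. CC B n (fst ij) \<times> CC B n (snd ij)) \<subseteq> CC B (Suc n) k"
  proof clarify
    fix i j u1 u2 assume ij: "(i, j) \<in> SS B k" and u1: "u1 \<in> CC B n (fst (i,j))" and u2: "u2 \<in> CC B n (snd (i,j))"
    have kij: "(k,i,j) \<in> B" using ij by (simp add: SS_def)
    hence k12: "k \<in> {1,2}" using basic by (auto simp: basic_set_def)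
    have b1: "u1 \<in> blocks B n" "u1 [] = i" and b2: "u2 \<in> blocks B n" "u2 [] = j" using u1 u2 by (auto simp: CC_def)
    let ?u = "join k u1 u2"
    have A: "\<forall>w\<in>words_le (Suc n). ?u w \<in> {1,2}"
    proof
      fix w assume w: "w \<in> words_le (Suc n)"
      show "?u w \<in> {1,2}"
      proof (cases w)
        case Nil thus ?thesis using k12 by (simp add: join_def)
      next
        case (Cons x w') thus ?thesis using w words_le_Cons[of x w' n] b1 b2
          by (auto simp: join_def blocks_def)
      qed
    qed
    have Bz: "\<forall>w. w \<notin> words_le (Suc n) \<longrightarrow> ?u w = 0"
    proof (intro allI impI)
      fix w assume w: "w \<notin> words_le (Suc n)"
      show "?u w = 0"
      proof (cases w)
        case Nil thus ?thesis using w by simp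
      next
        case (Cons x w') thus ?thesis using w words_le_Cons[of x w' n] b1 b2
          by (auto simp: join_def blocks_def)
      qed
    qed
    have C: "\<forall>w. set w \<subseteq> {1,2} \<and> length w < Suc n \<longrightarrow> (?u w, ?u (w @ [1]), ?u (w @ [2])) \<in> B"
    proof (intro allI impI)
      fix w :: "nat list" assume w: "set w \<subseteq> {1,2} \<and> length w < Suc n"
      show "(?u w, ?u (w @ [1]), ?u (w @ [2])) \<in> B"
      proof (cases w)
        case Nil thus ?thesis using kij b1 b2 by (simp add: join_def)
      next
        case (Cons x w')
        hence "x = 1 \<or> x = 2" "set w' \<subseteq> {1,2}" "length w' < n" using w by auto
        thus ?thesis using Cons b1 b2 by (auto simp: join_def blocks_def)
      qed
    qed
    have "?u [] = k" by (simp add: join_def)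
    thus "?u \<in> CC B (Suc n) k" using A Bz C by (simp add: CC_def blocks_def)
  qed
qed

lemma join_inj:
  assumes "join k u1 u2 = join k v1 v2" shows "u1 = v1" "u2 = v2"
proof -
  have "\<And>w. join k u1 u2 (1 # w) = join k v1 v2 (1 # w)" "\<And>w. join k u1 u2 (2 # w) = join k v1 v2 (2 # w)"
    using assms by auto
  thus "u1 = v1" "u2 = v2" by (auto simp: join_def)
qed

lemma SS_finite: "basic_set B \<Longrightarrow> finite (SS B k)"
  by (rule finite_subset[of _ "{1,2} \<times> {1,2}"]) (auto simp: SS_def basic_set_def)

lemma CC_0: "CC B 0 k = (if k \<in> {1,2} then {\<lambda>w. if w = [] then k else 0} else {})"
proof -
  have wl: "words_le 0 = {[]}" by (auto simp: words_le_def)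
  show ?thesis by (auto simp: CC_def blocks_def wl)
qed

lemma join_inj_on: "inj_on (\<lambda>(ij, (u1, u2)). join k u1 u2) (SIGMA ij:SS B k. CC B n (fst ij) \<times> CC B n (snd ij))"
proof (rule inj_onI)
  fix x y assume x: "x \<in> (SIGMA ij:SS B k. CC B n (fst ij) \<times> CC B n (snd ij))"
    and y: "y \<in> (SIGMA ij:SS B k. CC B n (fst ij) \<times> CC B n (snd ij))"
    and e0: "(\<lambda>(ij, (u1, u2)). join k u1 u2) x = (\<lambda>(ij, (u1, u2)). join k u1 u2) y"
  obtain i j u1 u2 where xe: "x = ((i,j),(u1,u2))" by (metis prod.exhaust)
  obtain i' j' v1 v2 where ye: "y = ((i',j'),(v1,v2))" by (metis prod.exhaust)
  have e: "join k u1 u2 = join k v1 v2" using e0 xe ye by simp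
  have "u1 [] = i" "u2 [] = j" "v1 [] = i'" "v2 [] = j'" using x y xe ye by (auto simp: CC_def)
  thus "x = y" using join_inj[OF e] xe ye by auto
qed

lemma CC_card_finite:
  assumes basic: "basic_set B"
  shows "finite (CC B n k) \<and> card (CC B (Suc n) k) = (\<Sum>ij\<in>SS B k. card (CC B n (fst ij)) * card (CC B n (snd ij)))"
proof (induction n arbitrary: k)
  case 0
  have f: "finite (CC B 0 k')" for k' by (simp add: CC_0)
  have "card (CC B (Suc 0) k) = card (SIGMA ij:SS B k. CC B 0 (fst ij) \<times> CC B 0 (snd ij))"
    by (subst CC_Suc[OF basic], rule card_image, rule join_inj_on)
  also have "\<dots> = (\<Sum>ij\<in>SS B k. card (CC B 0 (fst ij)) * card (CC B 0 (snd ij)))"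
    using SS_finite[OF basic] f by (simp add: card_cartesian_product)
  finally show ?case using f by simp
next
  case (Suc n)
  have f: "finite (CC B (Suc n) k')" for k'
    unfolding CC_Suc[OF basic] using SS_finite[OF basic] Suc.IH by auto
  have "card (CC B (Suc (Suc n)) k) = card (SIGMA ij:SS B k. CC B (Suc n) (fst ij) \<times> CC B (Suc n) (snd ij))"
    by (subst CC_Suc[OF basic], rule card_image, rule join_inj_on)
  also have "\<dots> = (\<Sum>ij\<in>SS B k. card (CC B (Suc n) (fst ij)) * card (CC B (Suc n) (snd ij)))"
    using SS_finite[OF basic] f by (simp add: card_cartesian_product)
  finally show ?case using f by simp
qed



lemma CC_card0: "k \<in> {1,2} \<Longrightarrow> card (CC B 0 k) = 1"
  by (simp add: CC_0)

lemma acount_CC: "acount B n = card (CC B n 1)" and bcount_CC: "bcount B n = card (CC B n 2)"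
  by (simp_all add: acount_def bcount_def CC_def)

lemma blocks_split: "blocks B n = CC B n 1 \<union> CC B n 2"
  by (auto simp: CC_def blocks_def)

lemma card_blocks: assumes "basic_set B" shows "card (blocks B n) = acount B n + bcount B n"
proof -
  have "finite (CC B n k)" for k using CC_card_finite[OF assms] by blast
  thus ?thesis unfolding blocks_split acount_CC bcount_CC
    by (intro card_Un_disjoint) (auto simp: CC_def)
qed

lemma SS_eq: "basic_set B \<Longrightarrow> SS B k = {ij \<in> {1,2} \<times> {1,2}. (k, fst ij, snd ij) \<in> B}"
  by (auto simp: SS_def basic_set_def)

lemma SNRE_expl: assumes "basic_set B"
  shows "SNRE B k x y = (if (k,1,1)\<in>B then x*x else 0) + (if (k,1,2)\<in>B then x*y else 0)
     + (if (k,2,1)\<in>B then y*x else 0) + (if (k,2,2)\<in>B then y*y else 0)"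
proof -
  have "SNRE B k x y = (\<Sum>ij\<in>SS B k. zvar (fst ij) x y * zvar (snd ij) x y)"
    by (simp add: SNRE_def SS_def case_prod_beta)
  also have "\<dots> = (\<Sum>ij\<in>{1,2} \<times> {1,2}. if (k, fst ij, snd ij) \<in> B then zvar (fst ij) x y * zvar (snd ij) x y else 0)"
    unfolding SS_eq[OF assms] by (rule sum.inter_filter) simp
  also have "{1,2} \<times> {1,2} = {(1::nat,1::nat),(1,2),(2,1),(2,2)}" by auto
  finally show ?thesis by (simp add: zvar_def)
qed

lemma rec_real: assumes basic: "basic_set B"
  shows "real (card (CC B (Suc n) k)) = SNRE B k (real (acount B n)) (real (bcount B n))"
proof -
  have "real (card (CC B (Suc n) k)) = (\<Sum>ij\<in>SS B k. real (card (CC B n (fst ij))) * real (card (CC B n (snd ij))))"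
    using CC_card_finite[OF basic, of n k] by simp
  also have "\<dots> = (\<Sum>ij\<in>SS B k. zvar (fst ij) (real (acount B n)) (real (bcount B n)) * zvar (snd ij) (real (acount B n)) (real (bcount B n)))"
  proof (rule sum.cong)
    fix ij assume "ij \<in> SS B k"
    hence "fst ij \<in> {1,2}" "snd ij \<in> {1,2}" using basic by (auto simp: SS_def basic_set_def)
    thus "real (card (CC B n (fst ij))) * real (card (CC B n (snd ij))) = zvar (fst ij) (real (acount B n)) (real (bcount B n)) * zvar (snd ij) (real (acount B n)) (real (bcount B n))"
      by (auto simp: zvar_def acount_CC bcount_CC)
  qed simp
  also have "\<dots> = SNRE B k (real (acount B n)) (real (bcount B n))"
    by (simp add: SNRE_def SS_def case_prod_beta)
  finally show ?thesis .
qed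

lemma entropy_lim:
  assumes "(\<lambda>n. ln (real (card (blocks B n))) / 2 ^ n) \<longlonglongrightarrow> Q"
  shows "entropy B = ereal (Q / 2)"
proof -
  have h: "(\<lambda>n::nat. (2::real) ^ n / (2 ^ (n + 1) - 1)) \<longlonglongrightarrow> 1/2" by real_asymp
  have "(\<lambda>n. (ln (real (card (blocks B n))) / 2 ^ n) * (2 ^ n / (2 ^ (n + 1) - 1))) \<longlonglongrightarrow> Q * (1/2)"
    by (rule tendsto_mult[OF assms h])
  moreover have "(\<lambda>n. (ln (real (card (blocks B n))) / 2 ^ n) * (2 ^ n / (2 ^ (n + 1) - 1))) = (\<lambda>n. ln (real (card (blocks B n))) / (2 ^ (n + 1) - 1))"
    by (rule ext) (simp add: field_simps)
  ultimately have "(\<lambda>n. ereal (ln (real (card (blocks B n))) / (2 ^ (n + 1) - 1))) \<longlonglongrightarrow> ereal (Q/2)"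
    by (simp add: tendsto_ereal)
  thus ?thesis unfolding entropy_def by (intro lim_imp_Limsup) auto
qed



lemma coeff_ne0: assumes "basic_set B"
  shows "SNRE_coeff B k d \<noteq> 0 \<longleftrightarrow> (\<exists>i j. (k,i,j) \<in> B \<and> xdeg i j = d)"
proof -
  have "finite {(i, j). (k, i, j) \<in> B \<and> xdeg i j = d}"
    by (rule finite_subset[of _ "{1,2} \<times> {1,2}"]) (use assms in \<open>auto simp: basic_set_def\<close>)
  thus ?thesis unfolding SNRE_coeff_def by auto
qed

lemma ex_xdeg: assumes basic: "basic_set B"
  shows "(\<exists>i j. (k,i,j) \<in> B \<and> xdeg i j = d) \<longleftrightarrow>
    ((k,1,1)\<in>B \<and> d=2) \<or> ((k,1,2)\<in>B \<and> d=1) \<or> ((k,2,1)\<in>B \<and> d=1) \<or> ((k,2,2)\<in>B \<and> d=0)"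
proof
  assume "\<exists>i j. (k,i,j) \<in> B \<and> xdeg i j = d"
  then obtain i j where ij: "(k,i,j) \<in> B" "xdeg i j = d" by blast
  hence "i \<in> {1,2}" "j \<in> {1,2}" using basic by (auto simp: basic_set_def)
  thus "((k,1,1)\<in>B \<and> d=2) \<or> ((k,1,2)\<in>B \<and> d=1) \<or> ((k,2,1)\<in>B \<and> d=1) \<or> ((k,2,2)\<in>B \<and> d=0)"
    using ij by (auto simp: xdeg_def)
next
  assume "((k,1,1)\<in>B \<and> d=2) \<or> ((k,1,2)\<in>B \<and> d=1) \<or> ((k,2,1)\<in>B \<and> d=1) \<or> ((k,2,2)\<in>B \<and> d=0)"
  thus "\<exists>i j. (k,i,j) \<in> B \<and> xdeg i j = d"
  proof (elim disjE conjE)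
    assume "(k,1,1)\<in>B" "d=2" thus ?thesis by (intro exI[of _ 1] exI[of _ 1]) (simp add: xdeg_def)
  next
    assume "(k,1,2)\<in>B" "d=1" thus ?thesis by (intro exI[of _ 1] exI[of _ 2]) (simp add: xdeg_def)
  next
    assume "(k,2,1)\<in>B" "d=1" thus ?thesis by (intro exI[of _ 2] exI[of _ 1]) (simp add: xdeg_def)
  next
    assume "(k,2,2)\<in>B" "d=0" thus ?thesis by (intro exI[of _ 2] exI[of _ 2]) (simp add: xdeg_def)
  qed
qed

lemma F1_expl: assumes basic: "basic_set B"
  shows "F1 B k = (if (k,1,1)\<in>B then Some 2 else if (k,1,2)\<in>B \<or> (k,2,1)\<in>B then Some 1
     else if (k,2,2)\<in>B then Some 0 else None)"
proof -
  define P11 where "P11 = ((k,1::nat,1::nat)\<in>B)"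
  define P1 where "P1 = ((k,1::nat,2::nat)\<in>B \<or> (k,2::nat,1::nat)\<in>B)"
  define P22 where "P22 = ((k,2::nat,2::nat)\<in>B)"
  have S: "{d. d \<le> 2 \<and> SNRE_coeff B k d \<noteq> 0} = (if P11 then {2} else {}) \<union> (if P1 then {1} else {}) \<union> (if P22 then {0} else {})"
    unfolding coeff_ne0[OF basic] ex_xdeg[OF basic] P11_def P1_def P22_def by auto
  show ?thesis unfolding F1_def Let_def S P11_def[symmetric] P1_def[symmetric] P22_def[symmetric]
    by (cases P11; cases P1; cases P22) auto
qed



lemma Rinv_row1:
  fixes R :: "real^2^2"
  assumes R_inv: "invertible R" and R11: "R $ 1 $ 1 = 1"
    and R_diag: "((\<chi> i j. 1) :: real^2^2) = R ** ((\<chi> i j. if i = 1 \<and> j = 1 then 2 else 0) :: real^2^2) ** matrix_inv R"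
  shows "matrix_inv R $ 1 $ 1 = 1/2 \<and> matrix_inv R $ 1 $ 2 = 1/2"
proof -
  define M where "M = matrix_inv R"
  define D where "D = ((\<chi> i j. if i = 1 \<and> j = 1 then 2 else 0) :: real^2^2)"
  define Ones where "Ones = ((\<chi> i j. 1) :: real^2^2)"
  have inv: "R ** M = mat 1 \<and> M ** R = mat 1"
    unfolding M_def matrix_inv_def using R_inv unfolding invertible_def by (rule someI_ex)
  have e: "Ones = R ** D ** M" using R_diag unfolding Ones_def D_def M_def .
  have e1: "Ones ** R = R ** D"
    by (metis e inv matrix_mul_assoc matrix_mul_rid)
  have e2: "M ** Ones = D ** M"
    by (metis e inv matrix_mul_assoc matrix_mul_lid)
  have "(Ones ** R) $ 2 $ 1 = (R ** D) $ 2 $ 1" using e1 by simp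
  hence R21: "R $ 2 $ 1 = 1" using R11 by (simp add: matrix_matrix_mult_def sum_2 Ones_def D_def)
  have "(M ** Ones) $ 1 $ 1 = (D ** M) $ 1 $ 1" "(M ** Ones) $ 1 $ 2 = (D ** M) $ 1 $ 2" using e2 by simp_all
  hence m: "M $ 1 $ 1 + M $ 1 $ 2 = 2 * M $ 1 $ 1" "M $ 1 $ 1 + M $ 1 $ 2 = 2 * M $ 1 $ 2"
    by (simp_all add: matrix_matrix_mult_def sum_2 Ones_def D_def)
  have "(M ** R) $ 1 $ 1 = 1" using inv by (simp add: mat_def)
  hence "M $ 1 $ 1 * R $ 1 $ 1 + M $ 1 $ 2 * R $ 2 $ 1 = 1" by (simp add: matrix_matrix_mult_def sum_2)
  hence "M $ 1 $ 1 + M $ 1 $ 2 = 1" using R11 R21 by simp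
  thus ?thesis using m unfolding M_def by linarith
qed



lemma basics:
  assumes basic: "basic_set B"
  shows "real (acount B 0) = 1" "real (bcount B 0) = 1"
    "real (acount B (Suc n)) = SNRE B 1 (real (acount B n)) (real (bcount B n))"
    "real (bcount B (Suc n)) = SNRE B 2 (real (acount B n)) (real (bcount B n))"
    "real (card (blocks B n)) = real (acount B n) + real (bcount B n)"
  using CC_card0[of 1 B] CC_card0[of 2 B] rec_real[OF basic, of n 1] rec_real[OF basic, of n 2] card_blocks[OF basic, of n]
  by (simp_all add: acount_CC bcount_CC)

lemma part0:
  assumes basic: "basic_set B"
    and dominate: "\<forall>n. acount B n \<ge> bcount B n"
    and essential: "\<exists>n. acount B n \<ge> 2"
  shows "F1 B 1 \<noteq> Some 0"
proof
  assume F: "F1 B 1 = Some 0"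
  define a where "a n = real (acount B n)" for n
  define b where "b n = real (bcount B n)" for n
  have mem: "(1,1,1) \<notin> B" "(1,1,2) \<notin> B" "(1,2,1) \<notin> B" "(1,2,2) \<in> B"
    using F unfolding F1_expl[OF basic] by (auto split: if_splits)
  have ra: "a (Suc n) = b n * b n" for n
    using basics(3)[OF basic, of n] mem unfolding a_def b_def by (simp add: SNRE_expl[OF basic])
  have rb: "b (Suc n) = SNRE B 2 (a n) (b n)" for n
    using basics(4)[OF basic, of n] unfolding a_def b_def by simp
  have a0: "a 0 = 1" "b 0 = 1" using basics[OF basic] unfolding a_def b_def by auto
  have nn: "a n \<ge> 0" "b n \<ge> 0" for n unfolding a_def b_def by auto
  define s where "s = (if (2,1,1)\<in>B then 1 else 0) + (if (2,1,2)\<in>B then 1 else 0)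
     + (if (2,2,1)\<in>B then 1 else 0) + (if (2,2,2)\<in>B then 1 else (0::real))"
  have "b 1 = s" using rb[of 0] a0 by (simp add: SNRE_expl[OF basic] s_def)
  moreover have "b 1 \<le> a 1" using dominate unfolding a_def b_def by simp
  moreover have "a 1 = 1" using ra[of 0] a0 by simp
  ultimately have s1: "s \<le> 1" by simp
  have le1: "\<And>x y :: real. 0 \<le> x \<Longrightarrow> x \<le> 1 \<Longrightarrow> 0 \<le> y \<Longrightarrow> y \<le> 1 \<Longrightarrow> x * y \<le> 1"
    by (simp add: mult_le_one)
  have "a n \<le> 1 \<and> b n \<le> 1" for n
  proof (induction n)
    case 0 thus ?case using a0 by simp
  next
    case (Suc n)
    have "a (Suc n) \<le> 1" using ra[of n] Suc nn[of n] le1 by simp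
    moreover have "b (Suc n) \<le> s"
      unfolding rb SNRE_expl[OF basic] s_def
      using Suc nn[of n] le1[of "a n" "a n"] le1[of "a n" "b n"] le1[of "b n" "a n"] le1[of "b n" "b n"]
      by (intro add_mono) auto
    ultimately show ?case using s1 by simp
  qed
  moreover obtain n where "acount B n \<ge> 2" using essential by blast
  ultimately show False unfolding a_def by (metis of_nat_le_iff of_nat_1 numeral_le_one_iff semiring_norm(69) order_trans)
qed



lemma sum4_le:
  fixes t1 t2 t3 t4 M1 M2 M3 M4 :: real
  assumes "p1 \<Longrightarrow> t1 \<le> M1" "0 \<le> M1" "p2 \<Longrightarrow> t2 \<le> M2" "0 \<le> M2" "p3 \<Longrightarrow> t3 \<le> M3" "0 \<le> M3" "p4 \<Longrightarrow> t4 \<le> M4" "0 \<le> M4"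
  shows "(if p1 then t1 else 0) + (if p2 then t2 else 0) + (if p3 then t3 else 0) + (if p4 then t4 else 0) \<le> M1+M2+M3+M4"
  using assms by (intro add_mono) auto

lemma part1:
  assumes basic: "basic_set B"
    and dominate: "\<forall>n. acount B n \<ge> bcount B n"
    and F: "F1 B 1 = Some 2"
  shows "\<exists>L. (\<lambda>n. ln (real (acount B 1)) + (\<Sum>j=1..<n. (1/2) ^ j * ln (rr B 1 j))) \<longlonglongrightarrow> L
              \<and> entropy B = ereal (L / 4)"
proof -
  define a where "a n = real (acount B n)" for n
  define b where "b n = real (bcount B n)" for n
  have mem: "(1,1,1) \<in> B"
    using F unfolding F1_expl[OF basic] by (auto split: if_splits)
  have ra: "a (Suc n) = SNRE B 1 (a n) (b n)" for n
    using basics(3)[OF basic, of n] unfolding a_def b_def by simp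
  have a0: "a 0 = 1" "b 0 = 1" using basics[OF basic] unfolding a_def b_def by auto
  have nn: "a n \<ge> 0" "b n \<ge> 0" for n unfolding a_def b_def by auto
  have dom: "b n \<le> a n" for n using dominate unfolding a_def b_def by simp
  have lo: "a (Suc n) \<ge> a n * a n" for n
    unfolding ra SNRE_expl[OF basic] using mem nn[of n] by simp
  have hi: "a (Suc n) \<le> 4 * (a n * a n)" for n
  proof -
    have "a n * b n \<le> a n * a n" "b n * a n \<le> a n * a n" "b n * b n \<le> a n * a n"
      using dom[of n] nn[of n] by (auto intro: mult_mono)
    hence "SNRE B 1 (a n) (b n) \<le> a n * a n + a n * a n + a n * a n + a n * a n"
      unfolding SNRE_expl[OF basic] using nn[of n] by (intro sum4_le) auto
    thus ?thesis unfolding ra by simp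
  qed
  have a1: "a n \<ge> 1" for n
  proof (induction n)
    case 0 thus ?case using a0 by simp
  next
    case (Suc n)
    have "1 * 1 \<le> a n * a n" using Suc.IH by (intro mult_mono) auto
    thus ?case using lo[of n] by simp
  qed
  define q where "q n = ln (a n) / 2 ^ n" for n
  have lnlo: "ln (a (Suc n)) \<ge> 2 * ln (a n)" for n
  proof -
    have "ln (a n * a n) \<le> ln (a (Suc n))" using lo[of n] a1[of n] a1[of "Suc n"] by (subst ln_le_cancel_iff) auto
    thus ?thesis using a1[of n] by (simp add: ln_mult)
  qed
  have lnhi: "ln (a (Suc n)) \<le> ln 4 + 2 * ln (a n)" for n
  proof -
    have "ln (a (Suc n)) \<le> ln (4 * (a n * a n))" using hi[of n] a1[of n] a1[of "Suc n"]
      by (subst ln_le_cancel_iff) (auto intro: mult_pos_pos)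
    thus ?thesis using a1[of n] by (simp add: ln_mult)
  qed
  have inc: "incseq q"
  proof (rule incseq_SucI)
    fix n show "q n \<le> q (Suc n)" using lnlo[of n] unfolding q_def by (simp add: field_simps)
  qed
  have bnd: "q n \<le> ln 4 - ln 4 / 2 ^ n" for n
  proof (induction n)
    case 0 thus ?case using a0 by (simp add: q_def)
  next
    case (Suc n)
    have "q (Suc n) \<le> q n + ln 4 / 2 ^ Suc n" using lnhi[of n] unfolding q_def by (simp add: field_simps)
    thus ?case using Suc by (simp add: field_simps)
  qed
  have bnd': "q n \<le> ln 4" for n
  proof -
    have "ln (4::real) / 2 ^ n \<ge> 0" by simp
    thus ?thesis using bnd[of n] by linarith
  qed
  obtain Q where Q: "q \<longlonglongrightarrow> Q" using incseq_convergent[OF inc] bnd' by blast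
  define S where "S n = ln (real (acount B 1)) + (\<Sum>j=1..<n. (1/2) ^ j * ln (rr B 1 j))" for n
  have rr: "ln (rr B 1 j) = ln (a (Suc j)) - 2 * ln (a j)" for j
  proof -
    have "rr B 1 j = a (Suc j) / (a j * a j)"
      unfolding rr_def F ra a_def[symmetric] b_def[symmetric] by (simp add: mono_def power2_eq_square)
    thus ?thesis using a1[of j] a1[of "Suc j"] by (simp add: ln_div ln_mult)
  qed
  have Sq: "S (Suc n) = 2 * q (Suc n)" for n
  proof (induction n)
    case 0 thus ?case by (simp add: S_def q_def a_def)
  next
    case (Suc n)
    have "S (Suc (Suc n)) = S (Suc n) + (1/2) ^ Suc n * ln (rr B 1 (Suc n))" by (simp add: S_def)
    thus ?case using Suc unfolding rr q_def by (simp add: field_simps)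
  qed
  have "(\<lambda>n. S (Suc n)) \<longlonglongrightarrow> 2 * Q"
    unfolding Sq by (intro tendsto_mult tendsto_const) (rule LIMSEQ_Suc[OF Q])
  hence SL: "S \<longlonglongrightarrow> 2 * Q" by (rule LIMSEQ_imp_Suc)
  have z: "(\<lambda>n. q n + ln 2 / 2 ^ n) \<longlonglongrightarrow> Q + 0"
    by (intro tendsto_add Q) real_asymp
  have "(\<lambda>n. ln (real (card (blocks B n))) / 2 ^ n) \<longlonglongrightarrow> Q"
  proof (rule tendsto_sandwich[OF _ _ Q])
    show "\<forall>\<^sub>F n in sequentially. q n \<le> ln (real (card (blocks B n))) / 2 ^ n"
    proof (intro always_eventually allI)
      fix n
      have "ln (a n) \<le> ln (a n + b n)" using a1[of n] nn[of n] by (subst ln_le_cancel_iff) auto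
      thus "q n \<le> ln (real (card (blocks B n))) / 2 ^ n"
        unfolding q_def basics(5)[OF basic] a_def[symmetric] b_def[symmetric] by (simp add: divide_right_mono)
    qed
    show "\<forall>\<^sub>F n in sequentially. ln (real (card (blocks B n))) / 2 ^ n \<le> q n + ln 2 / 2 ^ n"
    proof (intro always_eventually allI)
      fix n
      have "ln (a n + b n) \<le> ln (2 * a n)" using a1[of n] nn[of n] dom[of n] by (subst ln_le_cancel_iff) auto
      hence "ln (a n + b n) \<le> ln 2 + ln (a n)" using a1[of n] by (simp add: ln_mult)
      hence "ln (a n + b n) / 2 ^ n \<le> (ln 2 + ln (a n)) / 2 ^ n" by (simp add: divide_right_mono)
      thus "ln (real (card (blocks B n))) / 2 ^ n \<le> q n + ln 2 / 2 ^ n"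
        unfolding q_def basics(5)[OF basic] a_def[symmetric] b_def[symmetric] by (simp add: add_divide_distrib)
    qed
  qed (use z in simp)
  hence "entropy B = ereal (Q / 2)" by (rule entropy_lim)
  hence "entropy B = ereal ((2 * Q) / 4)" by simp
  thus ?thesis using SL unfolding S_def by blast
qed



lemma part2:
  fixes R :: "real^2^2"
  assumes basic: "basic_set B"
    and dominate: "\<forall>n. acount B n \<ge> bcount B n"
    and R_inv: "invertible R" and R11: "R $ 1 $ 1 = 1"
    and R_diag: "((\<chi> i j. 1) :: real^2^2) = R ** ((\<chi> i j. if i = 1 \<and> j = 1 then 2 else 0) :: real^2^2) ** matrix_inv R"
    and F: "F1 B 1 = Some 1" "F1 B 2 = Some 1"
  shows "\<exists>L. (\<lambda>n. (matrix_inv R *v (\<chi> i. if i = 1 then ln (real (acount B 1)) else ln (real (bcount B 1)))) $ 1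
                 + (\<Sum>j=1..<n. (1/2) ^ j *
                     (matrix_inv R *v (\<chi> i. if i = 1 then ln (rr B 1 j) else ln (rr B 2 j))) $ 1)) \<longlonglongrightarrow> L
              \<and> entropy B = ereal (L / 4)"
proof -
  define a where "a n = real (acount B n)" for n
  define b where "b n = real (bcount B n)" for n
  have mem: "(1,1,1) \<notin> B" "(1,1,2) \<in> B \<or> (1,2,1) \<in> B" "(2,1,1) \<notin> B" "(2,1,2) \<in> B \<or> (2,2,1) \<in> B"
    using F unfolding F1_expl[OF basic] by (auto split: if_splits)
  have ra: "a (Suc n) = SNRE B 1 (a n) (b n)" for n
    using basics(3)[OF basic, of n] unfolding a_def b_def by simp
  have rb: "b (Suc n) = SNRE B 2 (a n) (b n)" for n
    using basics(4)[OF basic, of n] unfolding a_def b_def by simp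
  have a0: "a 0 = 1" "b 0 = 1" using basics[OF basic] unfolding a_def b_def by auto
  have nn: "a n \<ge> 0" "b n \<ge> 0" for n unfolding a_def b_def by auto
  have dom: "b n \<le> a n" for n using dominate unfolding a_def b_def by simp
  have two: "x * y \<le> (if p then x * y else 0) + (if p' then y * x else 0)" if "p \<or> p'" "0 \<le> x" "0 \<le> y" for p p' and x y :: real
    using that by (cases p; cases p') auto
  have lo: "a (Suc n) \<ge> a n * b n \<and> b (Suc n) \<ge> a n * b n" for n
  proof -
    have "0 \<le> b n * b n" using nn[of n] by simp
    thus ?thesis unfolding ra rb SNRE_expl[OF basic] using mem nn[of n] two[OF mem(2), of "a n" "b n"] two[OF mem(4), of "a n" "b n"]
      by auto
  qed
  have hi: "a (Suc n) \<le> 3 * (a n * b n) \<and> b (Suc n) \<le> 3 * (a n * b n)" for n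
  proof -
    have h: "a n * b n \<le> a n * b n" "b n * a n \<le> a n * b n" "b n * b n \<le> a n * b n" "0 \<le> a n * b n"
      using dom[of n] nn[of n] by (auto intro: mult_mono)
    have "SNRE B 1 (a n) (b n) \<le> 0 + a n * b n + a n * b n + a n * b n"
      unfolding SNRE_expl[OF basic] using mem h by (intro sum4_le) auto
    moreover have "SNRE B 2 (a n) (b n) \<le> 0 + a n * b n + a n * b n + a n * b n"
      unfolding SNRE_expl[OF basic] using mem h by (intro sum4_le) auto
    ultimately show ?thesis unfolding ra rb by simp
  qed
  have ab1: "a n \<ge> 1 \<and> b n \<ge> 1" for n
  proof (induction n)
    case 0 thus ?case using a0 by simp
  next
    case (Suc n)
    have "1 * 1 \<le> a n * b n" using Suc.IH by (intro mult_mono) auto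
    thus ?case using lo[of n] by simp
  qed
  define p where "p n = ln (a n) + ln (b n)" for n
  define q where "q n = p n / 2 ^ n" for n
  have abpos: "0 < a n" "0 < b n" "0 < a n * b n" for n using ab1[of n] by auto
  have lnlo: "ln (a (Suc n)) \<ge> p n \<and> ln (b (Suc n)) \<ge> p n" for n
  proof -
    have "ln (a n * b n) \<le> ln (a (Suc n))" "ln (a n * b n) \<le> ln (b (Suc n))"
      using lo[of n] abpos[of n] abpos[of "Suc n"] by (subst ln_le_cancel_iff; simp)+
    thus ?thesis using abpos[of n] by (simp add: ln_mult p_def)
  qed
  have lnhi: "ln (a (Suc n)) \<le> ln 3 + p n \<and> ln (b (Suc n)) \<le> ln 3 + p n" for n
  proof -
    have "ln (a (Suc n)) \<le> ln (3 * (a n * b n))" "ln (b (Suc n)) \<le> ln (3 * (a n * b n))"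
      using hi[of n] abpos[of n] abpos[of "Suc n"] by (subst ln_le_cancel_iff; simp)+
    thus ?thesis using abpos[of n] by (simp add: ln_mult p_def)
  qed
  have inc: "incseq q"
  proof (rule incseq_SucI)
    fix n show "q n \<le> q (Suc n)" using lnlo[of n] unfolding q_def p_def[of "Suc n"] by (simp add: field_simps)
  qed
  have bnd: "q n \<le> 2 * ln 3 - 2 * ln 3 / 2 ^ n" for n
  proof (induction n)
    case 0 thus ?case using a0 by (simp add: q_def p_def)
  next
    case (Suc n)
    have "p (Suc n) \<le> 2 * p n + 2 * ln 3" using lnhi[of n] unfolding p_def[of "Suc n"] by linarith
    hence "p (Suc n) / 2 ^ Suc n \<le> (2 * p n + 2 * ln 3) / 2 ^ Suc n" by (simp add: divide_right_mono)
    hence "q (Suc n) \<le> q n + 2 * ln 3 / 2 ^ Suc n" unfolding q_def by (simp add: field_simps)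
    thus ?case using Suc by (simp add: field_simps)
  qed
  have bnd': "q n \<le> 2 * ln 3" for n
  proof -
    have "2 * ln (3::real) / 2 ^ n \<ge> 0" by simp
    thus ?thesis using bnd[of n] by linarith
  qed
  obtain Q where Q: "q \<longlonglongrightarrow> Q" using incseq_convergent[OF inc] bnd' by blast
  have M: "matrix_inv R $ 1 $ 1 = 1/2 \<and> matrix_inv R $ 1 $ 2 = 1/2" by (rule Rinv_row1[OF R_inv R11 R_diag])
  have Mv: "(matrix_inv R *v (\<chi> i. if i = 1 then X else Y)) $ 1 = (X + Y) / 2" for X Y
  proof -
    have "(matrix_inv R *v (\<chi> i. if i = 1 then X else Y)) $ 1 = matrix_inv R $ 1 $ 1 * X + matrix_inv R $ 1 $ 2 * Y"
      by (simp add: matrix_vector_mult_def sum_2)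
    thus ?thesis using M by simp
  qed
  define S where "S n = (matrix_inv R *v (\<chi> i. if i = 1 then ln (real (acount B 1)) else ln (real (bcount B 1)))) $ 1
                 + (\<Sum>j=1..<n. (1/2) ^ j *
                     (matrix_inv R *v (\<chi> i. if i = 1 then ln (rr B 1 j) else ln (rr B 2 j))) $ 1)" for n
  have rr: "ln (rr B 1 j) = ln (a (Suc j)) - p j" "ln (rr B 2 j) = ln (b (Suc j)) - p j" for j
  proof -
    have "rr B 1 j = a (Suc j) / (a j * b j)" "rr B 2 j = b (Suc j) / (a j * b j)"
      unfolding rr_def F ra rb a_def[symmetric] b_def[symmetric] by (simp_all add: mono_def)
    thus "ln (rr B 1 j) = ln (a (Suc j)) - p j" "ln (rr B 2 j) = ln (b (Suc j)) - p j"
      using abpos[of j] abpos[of "Suc j"] by (simp_all add: ln_div ln_mult p_def)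
  qed
  have Sq: "S (Suc n) = q (Suc n)" for n
  proof (induction n)
    case 0 thus ?case by (simp add: S_def q_def p_def a_def b_def Mv)
  next
    case (Suc n)
    have "S (Suc (Suc n)) = S (Suc n) + (1/2) ^ Suc n * ((ln (rr B 1 (Suc n)) + ln (rr B 2 (Suc n))) / 2)"
      by (simp add: S_def Mv)
    thus ?case using Suc unfolding rr q_def p_def[of "Suc (Suc n)"] by (simp add: field_simps)
  qed
  have "(\<lambda>n. S (Suc n)) \<longlonglongrightarrow> Q"
    unfolding Sq by (rule LIMSEQ_Suc[OF Q])
  hence SL: "S \<longlonglongrightarrow> Q" by (rule LIMSEQ_imp_Suc)
  have z: "(\<lambda>m. q m / 2 + (ln 3 + ln 2) / 2 ^ Suc m) \<longlonglongrightarrow> Q / 2 + 0"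
    by (intro tendsto_add tendsto_divide Q tendsto_const) (simp, real_asymp)
  have "(\<lambda>m. ln (real (card (blocks B (Suc m)))) / 2 ^ (Suc m)) \<longlonglongrightarrow> Q / 2"
  proof (rule tendsto_sandwich)
    show "\<forall>\<^sub>F m in sequentially. q m / 2 \<le> ln (real (card (blocks B (Suc m)))) / 2 ^ Suc m"
    proof (intro always_eventually allI)
      fix m
      have "ln (a (Suc m)) \<le> ln (a (Suc m) + b (Suc m))" using abpos[of "Suc m"] by (subst ln_le_cancel_iff) auto
      hence "p m \<le> ln (a (Suc m) + b (Suc m))" using lnlo[of m] by linarith
      hence "p m / 2 ^ Suc m \<le> ln (a (Suc m) + b (Suc m)) / 2 ^ Suc m" by (simp add: divide_right_mono)
      thus "q m / 2 \<le> ln (real (card (blocks B (Suc m)))) / 2 ^ Suc m"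
        unfolding q_def basics(5)[OF basic] a_def[symmetric] b_def[symmetric] by (simp add: field_simps)
    qed
    show "\<forall>\<^sub>F m in sequentially. ln (real (card (blocks B (Suc m)))) / 2 ^ Suc m \<le> q m / 2 + (ln 3 + ln 2) / 2 ^ Suc m"
    proof (intro always_eventually allI)
      fix m
      have "ln (a (Suc m) + b (Suc m)) \<le> ln (2 * a (Suc m))" using abpos[of "Suc m"] dom[of "Suc m"] by (subst ln_le_cancel_iff) auto
      hence "ln (a (Suc m) + b (Suc m)) \<le> ln 2 + ln (a (Suc m))" using abpos[of "Suc m"] by (simp add: ln_mult)
      hence "ln (a (Suc m) + b (Suc m)) \<le> p m + (ln 3 + ln 2)" using lnhi[of m] by linarith
      hence "ln (a (Suc m) + b (Suc m)) / 2 ^ Suc m \<le> (p m + (ln 3 + ln 2)) / 2 ^ Suc m" by (simp add: divide_right_mono)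
      thus "ln (real (card (blocks B (Suc m)))) / 2 ^ Suc m \<le> q m / 2 + (ln 3 + ln 2) / 2 ^ Suc m"
        unfolding q_def basics(5)[OF basic] a_def[symmetric] b_def[symmetric] by (simp add: field_simps)
    qed
  qed (use Q z in \<open>auto intro: tendsto_divide\<close>)
  hence "(\<lambda>n. ln (real (card (blocks B n))) / 2 ^ n) \<longlonglongrightarrow> Q / 2" by (rule LIMSEQ_imp_Suc)
  hence "entropy B = ereal (Q / 2 / 2)" by (rule entropy_lim)
  hence "entropy B = ereal (Q / 4)" by simp
  thus ?thesis using SL unfolding S_def by blast
qed



lemma part3:
  assumes basic: "basic_set B"
    and F: "F1 B 1 = Some 1" "F1 B 2 = Some 0"
  shows "(\<exists>c>0. \<forall>n\<ge>1. ln (real (card (blocks B n))) \<le> c * real n) \<and> entropy B = 0"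
proof -
  define a where "a n = real (acount B n)" for n
  define b where "b n = real (bcount B n)" for n
  have mem: "(1,1,1) \<notin> B" "(2,1,1) \<notin> B" "(2,1,2) \<notin> B" "(2,2,1) \<notin> B" "(2,2,2) \<in> B"
    using F unfolding F1_expl[OF basic] by (auto split: if_splits)
  have ra: "a (Suc n) = SNRE B 1 (a n) (b n)" for n
    using basics(3)[OF basic, of n] unfolding a_def b_def by simp
  have rb: "b (Suc n) = b n * b n" for n
    using basics(4)[OF basic, of n] mem unfolding a_def b_def by (simp add: SNRE_expl[OF basic])
  have a0: "a 0 = 1" "b 0 = 1" using basics[OF basic] unfolding a_def b_def by auto
  have nn: "a n \<ge> 0" "b n \<ge> 0" for n unfolding a_def b_def by auto
  have b1: "b n = 1" for n by (induction n) (simp_all add: a0 rb)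
  have hi: "a (Suc n) \<le> 2 * a n + 1" for n
  proof -
    have "SNRE B 1 (a n) (b n) \<le> 0 + a n + a n + 1"
      unfolding SNRE_expl[OF basic] using mem nn[of n] b1[of n] by (intro sum4_le) auto
    thus ?thesis unfolding ra by simp
  qed
  have abnd: "a n \<le> 2 ^ (n+1) - 1" for n
  proof (induction n)
    case 0 thus ?case using a0 by simp
  next
    case (Suc n) thus ?case using hi[of n] by simp
  qed
  have cb: "real (card (blocks B n)) = a n + 1" for n
    using basics(5)[OF basic, of n] b1[of n] unfolding a_def b_def by simp
  have lnb: "ln (real (card (blocks B n))) \<le> real (n+1) * ln 2" for n
  proof -
    have "ln (real (card (blocks B n))) \<le> ln (2 ^ (n+1))"
      unfolding cb using abnd[of n] nn[of n] by (subst ln_le_cancel_iff) auto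
    moreover have "ln ((2::real) ^ (n+1)) = real (n+1) * ln 2" by (rule ln_realpow)
    ultimately show ?thesis by simp
  qed
  have lnnn: "ln (real (card (blocks B n))) \<ge> 0" for n unfolding cb using nn[of n] by simp
  have C: "\<exists>c>0. \<forall>n\<ge>1. ln (real (card (blocks B n))) \<le> c * real n"
  proof (intro exI[of _ "2 * ln 2"] conjI allI impI)
    show "0 < 2 * ln (2::real)" by simp
    fix n :: nat assume "n \<ge> 1"
    hence "real (n+1) * ln 2 \<le> 2 * ln 2 * real n" by (simp add: field_simps)
    thus "ln (real (card (blocks B n))) \<le> 2 * ln 2 * real n" using lnb[of n] by linarith
  qed
  have z: "(\<lambda>n. real (n+1) * ln 2 / 2 ^ n) \<longlonglongrightarrow> 0" by real_asymp
  have "(\<lambda>n. ln (real (card (blocks B n))) / 2 ^ n) \<longlonglongrightarrow> 0"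
  proof (rule tendsto_sandwich[OF _ _ tendsto_const z])
    show "\<forall>\<^sub>F n in sequentially. 0 \<le> ln (real (card (blocks B n))) / 2 ^ n"
      using lnnn by simp
    show "\<forall>\<^sub>F n in sequentially. ln (real (card (blocks B n))) / 2 ^ n \<le> real (n+1) * ln 2 / 2 ^ n"
      using lnb by (simp add: divide_right_mono)
  qed
  hence "entropy B = ereal (0 / 2)" by (rule entropy_lim)
  thus ?thesis using C by (simp add: zero_ereal_def)
qed

theorem proposition3:
  fixes B :: "(nat \<times> nat \<times> nat) set" and R :: "real^2^2"
  assumes basic: "basic_set B"
    and dominate: "\<forall>n. acount B n \<ge> bcount B n"
    and essential: "\<exists>n. acount B n \<ge> 2"
    and R_inv: "invertible R" and R11: "R $ 1 $ 1 = 1"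
    and R_diag: "((\<chi> i j. 1) :: real^2^2) = R ** ((\<chi> i j. if i = 1 \<and> j = 1 then 2 else 0) :: real^2^2) ** matrix_inv R"
  shows "F1 B 1 \<noteq> Some 0
    \<and> (F1 B 1 = Some 2 \<longrightarrow>
         (\<exists>L. (\<lambda>n. ln (real (acount B 1)) + (\<Sum>j=1..<n. (1/2) ^ j * ln (rr B 1 j))) \<longlonglongrightarrow> L
              \<and> entropy B = ereal (L / 4)))
    \<and> (F1 B 1 = Some 1 \<and> F1 B 2 = Some 1 \<longrightarrow>
         (\<exists>L. (\<lambda>n. (matrix_inv R *v (\<chi> i. if i = 1 then ln (real (acount B 1)) else ln (real (bcount B 1)))) $ 1
                 + (\<Sum>j=1..<n. (1/2) ^ j *
                     (matrix_inv R *v (\<chi> i. if i = 1 then ln (rr B 1 j) else ln (rr B 2 j))) $ 1)) \<longlonglongrightarrow> L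
              \<and> entropy B = ereal (L / 4)))
    \<and> (F1 B 1 = Some 1 \<and> F1 B 2 = Some 0 \<longrightarrow>
         (\<exists>c>0. \<forall>n\<ge>1. ln (real (card (blocks B n))) \<le> c * real n) \<and> entropy B = 0)"
    using part0[OF basic dominate essential] part1[OF basic dominate]
    part2[OF basic dominate R_inv R11 R_diag] part3[OF basic] by blast

end
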